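(* Let $a(x)=\sum_i a_ix^i$ and $b(x)=\sum_ib_ix^i$ in $\mathbb{F}_2[x]/\langle x^n-1\rangle$ define a generalized bicycle code. Its Tanner graph has girth $4$ if and only if there exist indices $i,j,j'\in\{0,1,\dots,n-1\}$ with $j\ne j'$ such that at least one of the following holds (indices modulo $n$): (i) $i\neq 0$, $a_j=a_{j+i}=1$ and $a_{j'}=a_{j'+i}=1$; (ii) $i\neq 0$, $b_j=b_{j+i}=1$ and $b_{j'}=b_{j'+i}=1$; (iii) $a_j=b_{j+i}=1$ and $a_{j'}=b_{j'+i}=1$.
   Context: The Tanner graph of the GB code defined by $a,b$ is the bipartite graph with $n$ check nodes $x_0,\dots,x_{n-1}$ (rows of the X-check matrix $H_X=[G_{a(x)}\mid G_{b(x)}]$) and $2n$ qubit nodes $q_0,\dots,q_{n-1},q'_0,\dots,q'_{n-1}$, where $x_t$ is adjacent to $q_c$ iff $a_{t-c}=1$ and to $q'_c$ iff $b_{t-c}=1$ (indices mod $n$; $G_{a(x)}$ is the circulant matrix with $(t,c)$ entry $a_{t-c}$). The girth is the length of a shortest cycle. *)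

theory Defs
  imports Main "HOL-Library.Extended_Nat"
begin

text \<open>Coefficients of a(x), b(x) in F_2[x]/(x^n-1) are given as functions
  nat => bool (True meaning coefficient 1); only indices < n matter.\<close>

datatype tnode = Chk nat | Qb nat | Qp nat

text \<open>Tanner graph adjacency: x_t ~ q_c iff a_{t-c}=1, x_t ~ q'_c iff b_{t-c}=1 (mod n).\<close>
fun tanner_adj :: "nat \<Rightarrow> (nat \<Rightarrow> bool) \<Rightarrow> (nat \<Rightarrow> bool) \<Rightarrow> tnode \<Rightarrow> tnode \<Rightarrow> bool" where
  "tanner_adj n a b (Chk t) (Qb c) = (t < n \<and> c < n \<and> a ((t + n - c) mod n))"
| "tanner_adj n a b (Qb c) (Chk t) = (t < n \<and> c < n \<and> a ((t + n - c) mod n))"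
| "tanner_adj n a b (Chk t) (Qp c) = (t < n \<and> c < n \<and> b ((t + n - c) mod n))"
| "tanner_adj n a b (Qp c) (Chk t) = (t < n \<and> c < n \<and> b ((t + n - c) mod n))"
| "tanner_adj n a b _ _ = False"

definition is_cycle :: "('v \<Rightarrow> 'v \<Rightarrow> bool) \<Rightarrow> 'v list \<Rightarrow> bool" where
  "is_cycle E vs \<longleftrightarrow> length vs \<ge> 3 \<and> distinct vs \<and>
     (\<forall>i < length vs. E (vs ! i) (vs ! ((i + 1) mod length vs)))"

definition girth :: "('v \<Rightarrow> 'v \<Rightarrow> bool) \<Rightarrow> enat" where
  "girth E = (if \<exists>vs. is_cycle E vs
              then enat (LEAST k. \<exists>vs. is_cycle E vs \<and> length vs = k)
              else \<infinity>)"

end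

theory Submission
  imports Defs
begin

lemma Dint: "x < n \<Longrightarrow> y < n \<Longrightarrow> (x + n - y) mod n = nat ((int x - int y) mod int n)"
proof -
  assume h: "x < n" "y < n"
  have e: "int (x + n - y) = (int x - int y) + int n" using h by simp
  have "int ((x + n - y) mod n) = int (x + n - y) mod int n"
    by (simp add: of_nat_mod)
  also have "\<dots> = (int x - int y) mod int n" unfolding e by simp
  finally show ?thesis by (metis nat_int)
qed

lemma Aint: "(j + i) mod n = nat ((int j + int i) mod int n)"
  by (metis nat_int of_nat_add of_nat_mod)

lemma Lint: "j < n \<Longrightarrow> j = nat (int j mod int n)"
  by simp

lemma inj0: "x < n \<Longrightarrow> y < n \<Longrightarrow> (int x - int y) mod int n = 0 \<Longrightarrow> x = y"
proof -
  assume h: "x < n" "y < n" "(int x - int y) mod int n = 0"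
  then have "int n dvd (int x - int y)" by (simp add: mod_eq_0_iff_dvd)
  moreover have "\<bar>int x - int y\<bar> < int n" using h by auto
  ultimately have "int x - int y = 0" proof -
    show ?thesis
  proof (rule ccontr)
    assume "int x - int y \<noteq> 0"
    with \<open>int n dvd (int x - int y)\<close> have "\<bar>int n\<bar> \<le> \<bar>int x - int y\<bar>" by (rule dvd_imp_le_int[rotated])
    with \<open>\<bar>int x - int y\<bar> < int n\<close> show False by simp
  qed
  qed
  then show ?thesis by simp
qed

lemma four: "(\<forall>i<(4::nat). P i) \<longleftrightarrow> P 0 \<and> P 1 \<and> P 2 \<and> P 3"
  by (auto simp: less_Suc_eq numeral_eq_Suc)

lemma cyc4: "is_cycle E [w,x,y,z] \<longleftrightarrow> distinct [w,x,y,z] \<and> E w x \<and> E x y \<and> E y z \<and> E z w"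
proof -
  have l: "length [w,x,y,z] = 4" by simp
  show ?thesis unfolding is_cycle_def l four by simp
qed

lemma three: "(\<forall>i<(3::nat). P i) \<longleftrightarrow> P 0 \<and> P 1 \<and> P 2"
  by (auto simp: less_Suc_eq numeral_eq_Suc)

lemma cyc3: "is_cycle E [x,y,z] \<longleftrightarrow> distinct [x,y,z] \<and> E x y \<and> E y z \<and> E z x"
proof -
  have l: "length [x,y,z] = 3" by simp
  show ?thesis unfolding is_cycle_def l three by simp
qed

lemma no3: "\<not> is_cycle (tanner_adj n a b) vs \<or> length vs \<noteq> 3"
proof (cases "length vs = 3")
  case True
  then obtain x y z where v: "vs = [x,y,z]"
    by (auto simp: length_Suc_conv numeral_eq_Suc)
  show ?thesis unfolding v cyc3
    by (cases x; cases y; cases z; simp)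
qed simp

definition M :: "nat \<Rightarrow> int \<Rightarrow> nat" where "M n u = nat (u mod int n)"

lemma M_int: "n > 0 \<Longrightarrow> int (M n u) = u mod int n"
  unfolding M_def by simp

lemma M_lt: "n > 0 \<Longrightarrow> M n u < n"
  unfolding M_def by (simp add: nat_less_iff)

lemma M_eq: "n > 0 \<Longrightarrow> M n u = M n v \<longleftrightarrow> int n dvd (u - v)"
  unfolding M_def by (metis mod_eq_dvd_iff nat_int M_def M_int)

lemma M_add: "n > 0 \<Longrightarrow> (M n u + M n v) mod n = M n (u + v)"
  by (metis Aint M_def M_int mod_add_eq)

lemma D_M: "x < n \<Longrightarrow> y < n \<Longrightarrow> (x + n - y) mod n = M n (int x - int y)"
  unfolding M_def by (rule Dint)

lemma L_M: "j < n \<Longrightarrow> j = M n (int j)"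
  unfolding M_def by simp

lemma A_M: "(j + i) mod n = M n (int j + int i)"
  unfolding M_def by (rule Aint)

lemma inj_dvd: "x < n \<Longrightarrow> y < n \<Longrightarrow> int n dvd (int x - int y) \<Longrightarrow> x = y"
  using inj0 mod_eq_0_iff_dvd by blast

definition RHS where "RHS n a b \<longleftrightarrow> (\<exists>i j j'. i < n \<and> j < n \<and> j' < n \<and> j \<noteq> j' \<and>
      ((i \<noteq> 0 \<and> a j \<and> a ((j + i) mod n) \<and> a j' \<and> a ((j' + i) mod n)) \<or>
       (i \<noteq> 0 \<and> b j \<and> b ((j + i) mod n) \<and> b j' \<and> b ((j' + i) mod n)) \<or>
       (a j \<and> b ((j + i) mod n) \<and> a j' \<and> b ((j' + i) mod n))))"

lemma same_fwd:
  assumes n: "n > 0" and lt: "t1 < n" "t2 < n" "c1 < n" "c2 < n" and d: "t1 \<noteq> t2" "c1 \<noteq> c2"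
    and f: "f (M n (int t1 - int c1))" "f (M n (int t2 - int c1))" "f (M n (int t1 - int c2))" "f (M n (int t2 - int c2))"
  shows "\<exists>i j j'. i < n \<and> j < n \<and> j' < n \<and> j \<noteq> j' \<and> i \<noteq> 0 \<and> f j \<and> f ((j + i) mod n) \<and> f j' \<and> f ((j' + i) mod n)"
proof (intro exI conjI)
  let ?i = "M n (int t2 - int t1)" and ?j = "M n (int t1 - int c1)" and ?j' = "M n (int t1 - int c2)"
  show "?i < n" "?j < n" "?j' < n" using n by (simp_all add: M_lt)
  show "?j \<noteq> ?j'"
  proof
    assume "?j = ?j'"
    then have "int n dvd (int c2 - int c1)" using n by (simp add: M_eq)
    then show False using inj_dvd lt d by metis
  qed
  show "?i \<noteq> 0"
  proof
    assume "?i = 0"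
    then have "?i = M n 0" by (simp add: M_def)
    then have "int n dvd (int t2 - int t1)" using n by (simp add: M_eq)
    then show False using inj_dvd lt d by metis
  qed
  show "f ?j" "f ?j'" by (rule f)+
  have "(?j + ?i) mod n = M n (int t2 - int c1)" using n by (simp add: M_add)
  then show "f ((?j + ?i) mod n)" using f by simp
  have "(?j' + ?i) mod n = M n (int t2 - int c2)" using n by (simp add: M_add)
  then show "f ((?j' + ?i) mod n)" using f by simp
qed

lemma mix_fwd:
  assumes n: "n > 0" and lt: "t1 < n" "t2 < n" "c < n" "d < n" and dd: "t1 \<noteq> t2"
    and f: "f (M n (int t1 - int c))" "f (M n (int t2 - int c))" "g (M n (int t1 - int d))" "g (M n (int t2 - int d))"
  shows "\<exists>i j j'. i < n \<and> j < n \<and> j' < n \<and> j \<noteq> j' \<and> f j \<and> g ((j + i) mod n) \<and> f j' \<and> g ((j' + i) mod n)"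
proof (intro exI conjI)
  let ?i = "M n (int c - int d)" and ?j = "M n (int t1 - int c)" and ?j' = "M n (int t2 - int c)"
  show "?i < n" "?j < n" "?j' < n" using n by (simp_all add: M_lt)
  show "?j \<noteq> ?j'"
  proof
    assume "?j = ?j'"
    then have "int n dvd (int t1 - int t2)" using n by (simp add: M_eq)
    then show False using inj_dvd lt dd by metis
  qed
  show "f ?j" "f ?j'" by (rule f)+
  have "(?j + ?i) mod n = M n (int t1 - int d)" using n by (simp add: M_add)
  then show "g ((?j + ?i) mod n)" using f by simp
  have "(?j' + ?i) mod n = M n (int t2 - int d)" using n by (simp add: M_add)
  then show "g ((?j' + ?i) mod n)" using f by simp
qed


lemma adj_sym: "tanner_adj n a b u v = tanner_adj n a b v u"
  by (cases u; cases v; auto)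

lemma adj_chk: "tanner_adj n a b u v \<Longrightarrow> (\<exists>t. u = Chk t) \<longleftrightarrow> (\<nexists>t. v = Chk t)"
  by (cases u; cases v; auto)

lemma fwd_chk:
  assumes n: "n > 0" and e: "tanner_adj n a b (Chk t1) u" "tanner_adj n a b u (Chk t2)"
    "tanner_adj n a b (Chk t2) v" "tanner_adj n a b v (Chk t1)" and d: "t1 \<noteq> t2" "u \<noteq> v"
  shows "RHS n a b"
proof (cases u)
  case (Chk x1)
  then show ?thesis using e by simp
next
  case (Qb c1)
  show ?thesis
  proof (cases v)
    case (Chk x1)
    then show ?thesis using e by simp
  next
    case (Qb c2)
    from e have lt: "t1 < n" "t2 < n" "c1 < n" "c2 < n" using \<open>u = Qb c1\<close> Qb by auto
    show ?thesis using same_fwd[OF n lt, of a] e d lt \<open>u = Qb c1\<close> Qb unfolding RHS_def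
      by (auto simp: D_M)
  next
    case (Qp c2)
    from e have lt: "t1 < n" "t2 < n" "c1 < n" "c2 < n" using \<open>u = Qb c1\<close> Qp by auto
    show ?thesis using mix_fwd[OF n lt, of a b] e d lt \<open>u = Qb c1\<close> Qp unfolding RHS_def
      by (auto simp: D_M)
  qed
next
  case (Qp c1)
  show ?thesis
  proof (cases v)
    case (Chk x1)
    then show ?thesis using e by simp
  next
    case (Qp c2)
    from e have lt: "t1 < n" "t2 < n" "c1 < n" "c2 < n" using \<open>u = Qp c1\<close> Qp by auto
    show ?thesis using same_fwd[OF n lt, of b] e d lt \<open>u = Qp c1\<close> Qp unfolding RHS_def
      by (auto simp: D_M)
  next
    case (Qb c2)
    from e have lt: "t1 < n" "t2 < n" "c2 < n" "c1 < n" using \<open>u = Qp c1\<close> Qb by auto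
    show ?thesis using mix_fwd[OF n lt, of a b] e d lt \<open>u = Qp c1\<close> Qb unfolding RHS_def
      by (auto simp: D_M)
  qed
qed

lemma M_mod1: "n > 0 \<Longrightarrow> M n (v - int (M n u)) = M n (v - u)"
  unfolding M_def by (simp add: mod_diff_right_eq)

lemma M_self: "j < n \<Longrightarrow> M n (int j) = j"
  unfolding M_def by simp


lemma M_neg_inj: "n > 0 \<Longrightarrow> j < n \<Longrightarrow> j' < n \<Longrightarrow> j \<noteq> j' \<Longrightarrow> M n (- int j) \<noteq> M n (- int j')"
proof
  assume n: "n > 0" and h: "j < n" "j' < n" "j \<noteq> j'" "M n (- int j) = M n (- int j')"
  then have "int n dvd (int j' - int j)" by (simp add: M_eq)
  then show False using inj_dvd h by metis
qed

lemma bwd: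
  assumes n: "n > 0" and r: "RHS n a b"
  shows "\<exists>vs. is_cycle (tanner_adj n a b) vs \<and> length vs = 4"
proof -
  obtain i j j' where h: "i < n" "j < n" "j' < n" "j \<noteq> j'" and
    c: "(i \<noteq> 0 \<and> a j \<and> a ((j + i) mod n) \<and> a j' \<and> a ((j' + i) mod n)) \<or>
       (i \<noteq> 0 \<and> b j \<and> b ((j + i) mod n) \<and> b j' \<and> b ((j' + i) mod n)) \<or>
       (a j \<and> b ((j + i) mod n) \<and> a j' \<and> b ((j' + i) mod n))"
    using r unfolding RHS_def by blast
  have m1: "M n (- int j) < n" "M n (- int j') < n" "M n (- int i) < n" using n by (simp_all add: M_lt)
  have ne: "M n (- int j) \<noteq> M n (- int j')" using M_neg_inj n h by blast
  have e1: "(0 + n - M n (- int j)) mod n = j" "(0 + n - M n (- int j')) mod n = j'"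
    using n h m1 by (simp_all only: D_M M_mod1, simp_all add: M_self)
  have e2: "(i + n - M n (- int j)) mod n = (j + i) mod n" "(i + n - M n (- int j')) mod n = (j' + i) mod n"
    using n h m1 by (simp_all only: D_M M_mod1 A_M, simp_all add: add.commute)
  have e3: "(j + n - 0) mod n = j" "(j' + n - 0) mod n = j'" using h by simp_all
  have e4: "(j + n - M n (- int i)) mod n = (j + i) mod n" "(j' + n - M n (- int i)) mod n = (j' + i) mod n"
    using n h m1 by (simp_all only: D_M M_mod1 A_M, simp_all)
  from c show ?thesis
  proof (elim disjE conjE)
    assume "i \<noteq> 0" "a j" "a ((j + i) mod n)" "a j'" "a ((j' + i) mod n)"
    then show ?thesis using e1 e2 ne m1 h n
      by (intro exI[of _ "[Chk 0, Qb (M n (- int j)), Chk i, Qb (M n (- int j'))]"]) (simp add: cyc4)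
  next
    assume "i \<noteq> 0" "b j" "b ((j + i) mod n)" "b j'" "b ((j' + i) mod n)"
    then show ?thesis using e1 e2 ne m1 h n
      by (intro exI[of _ "[Chk 0, Qp (M n (- int j)), Chk i, Qp (M n (- int j'))]"]) (simp add: cyc4)
  next
    assume "a j" "b ((j + i) mod n)" "a j'" "b ((j' + i) mod n)"
    then show ?thesis using e3 e4 m1 h n
      by (intro exI[of _ "[Chk j, Qb 0, Chk j', Qp (M n (- int i))]"]) (simp add: cyc4)
  qed
qed

lemma fwd:
  assumes n: "n > 0" and cy: "is_cycle (tanner_adj n a b) vs" "length vs = 4"
  shows "RHS n a b"
proof -
  obtain w x y z where vs: "vs = [w,x,y,z]" using cy(2) by (auto simp: length_Suc_conv numeral_eq_Suc)
  have key: "RHS n a b" if "distinct [w,x,y,z]" "tanner_adj n a b w x" "tanner_adj n a b x y"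
    "tanner_adj n a b y z" "tanner_adj n a b z w" "w = Chk t1" for w x y z t1
  proof -
    note A = that
    have "\<nexists>t. x = Chk t" using adj_chk[OF A(2)] A(6) by blast
    then obtain t2 where "y = Chk t2" using adj_chk[OF A(3)] by blast
    then show ?thesis using fwd_chk[OF n, of a b t1 x t2 z] A by auto
  qed
  have d: "distinct [w,x,y,z]" and e: "tanner_adj n a b w x" "tanner_adj n a b x y"
    "tanner_adj n a b y z" "tanner_adj n a b z w" using cy(1) vs by (simp_all add: cyc4)
  show ?thesis
  proof (cases "\<exists>t. w = Chk t")
    case True
    then show ?thesis using key[OF d e] by blast
  next
    case False
    then obtain t where "x = Chk t" using adj_chk[OF e(1)] by blast
    moreover have "distinct [x,y,z,w]" using d by auto
    ultimately show ?thesis using key[of x y z w t] e by blast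
  qed
qed

lemma no3': "is_cycle (tanner_adj n a b) vs \<Longrightarrow> length vs \<noteq> 3"
  using no3 by blast

lemma girth4: "girth (tanner_adj n a b) = 4 \<longleftrightarrow> (\<exists>vs. is_cycle (tanner_adj n a b) vs \<and> length vs = 4)"
proof
  assume g: "girth (tanner_adj n a b) = 4"
  then have ex: "\<exists>vs. is_cycle (tanner_adj n a b) vs"
    unfolding girth_def by (metis infinity_ne_i0 numeral_ne_infinity)
  then have "(LEAST k. \<exists>vs. is_cycle (tanner_adj n a b) vs \<and> length vs = k) = 4"
    using g unfolding girth_def by (simp add: numeral_eq_enat)
  moreover from ex have "\<exists>vs. is_cycle (tanner_adj n a b) vs \<and> length vs = (LEAST k. \<exists>vs. is_cycle (tanner_adj n a b) vs \<and> length vs = k)"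
    by (intro LeastI_ex[where P = "\<lambda>k. \<exists>vs. is_cycle (tanner_adj n a b) vs \<and> length vs = k"]) blast
  ultimately show "\<exists>vs. is_cycle (tanner_adj n a b) vs \<and> length vs = 4" by simp
next
  assume "\<exists>vs. is_cycle (tanner_adj n a b) vs \<and> length vs = 4"
  then obtain vs where v: "is_cycle (tanner_adj n a b) vs" "length vs = 4" by blast
  let ?L = "LEAST k. \<exists>vs. is_cycle (tanner_adj n a b) vs \<and> length vs = k"
  have le: "?L \<le> 4" using v by (intro Least_le) blast
  obtain us where u: "is_cycle (tanner_adj n a b) us" "length us = ?L"
    using LeastI_ex[where P = "\<lambda>k. \<exists>vs. is_cycle (tanner_adj n a b) vs \<and> length vs = k"] v by blast
  have "length us \<ge> 3" using u(1) unfolding is_cycle_def by simp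
  moreover have "length us \<noteq> 3" using no3' u(1) by blast
  ultimately have "?L = 4" using le u(2) by simp
  then show "girth (tanner_adj n a b) = 4" using v unfolding girth_def by (auto simp: numeral_eq_enat)
qed

theorem theorem10:
  fixes n :: nat and a b :: "nat \<Rightarrow> bool"
  assumes "n > 0"
  shows "girth (tanner_adj n a b) = 4 \<longleftrightarrow>
    (\<exists>i j j'. i < n \<and> j < n \<and> j' < n \<and> j \<noteq> j' \<and>
      ((i \<noteq> 0 \<and> a j \<and> a ((j + i) mod n) \<and> a j' \<and> a ((j' + i) mod n)) \<or>
       (i \<noteq> 0 \<and> b j \<and> b ((j + i) mod n) \<and> b j' \<and> b ((j' + i) mod n)) \<or>
       (a j \<and> b ((j + i) mod n) \<and> a j' \<and> b ((j' + i) mod n))))"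
proof -
  have "girth (tanner_adj n a b) = 4 \<longleftrightarrow> RHS n a b"
    using girth4 fwd[OF assms] bwd[OF assms] by blast
  then show ?thesis unfolding RHS_def .
qed

end
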